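(* Let $g:\mathbb{R}^n\to\mathbb{R}^m$ and $f:\mathbb{R}^m\to\mathbb{R}^r$. Suppose $g$ is second-order gph-regular at $x^*$ and $f$ is second-order gph-regular at $g(x^* )$. Then the composite mapping $h:=f\circ g$ is second-order gph-regular at $x^*$.
   Context: $g'(x;d)=\lim_{t\downarrow0}(g(x+td)-g(x))/t$; second-order directional derivative $g''(x;d,w):=\lim_{t\downarrow0}\frac{g(x+td+\frac12t^2w)-g(x)-tg'(x;d)}{\frac12t^2}$; $g$ is second-order directionally differentiable at $x$ if these exist for all $d,w$. A mapping $g$ is second-order gph-regular at $x^*$ if it is locally Lipschitz continuous and second-order directionally differentiable at $x^*$, and for every direction $d$ and every path $w:\mathbb{R}_+\to\mathbb{R}^n$ with $tw(t)\to0$ as $t\downarrow0$ there is $r$ with $\|r(t)\|/t^2\to0$ as $t\downarrow0$ such that $g(x^*+td+\frac12t^2w(t))=g(x^* )+tg'(x^*;d)+\frac12t^2g''(x^*;d,w(t))+r(t)$ for $t\ge0$. *)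

theory Defs
  imports "HOL-Analysis.Analysis"
begin

definition dir_deriv :: "('a::real_normed_vector \<Rightarrow> 'b::real_normed_vector) \<Rightarrow> 'a \<Rightarrow> 'a \<Rightarrow> 'b" where
  "dir_deriv g x d = Lim (at_right 0) (\<lambda>t::real. (g (x + t *\<^sub>R d) - g x) /\<^sub>R t)"

definition dir_deriv2 :: "('a::real_normed_vector \<Rightarrow> 'b::real_normed_vector) \<Rightarrow> 'a \<Rightarrow> 'a \<Rightarrow> 'a \<Rightarrow> 'b" where
  "dir_deriv2 g x d w = Lim (at_right 0)
     (\<lambda>t::real. (g (x + t *\<^sub>R d + ((1/2) * t\<^sup>2) *\<^sub>R w) - g x - t *\<^sub>R dir_deriv g x d) /\<^sub>R ((1/2) * t\<^sup>2))"

definition second_order_dir_differentiable :: "('a::real_normed_vector \<Rightarrow> 'b::real_normed_vector) \<Rightarrow> 'a \<Rightarrow> bool" where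
  "second_order_dir_differentiable g x \<longleftrightarrow>
     (\<forall>d. \<exists>v. ((\<lambda>t::real. (g (x + t *\<^sub>R d) - g x) /\<^sub>R t) \<longlongrightarrow> v) (at_right 0)) \<and>
     (\<forall>d w. \<exists>v. ((\<lambda>t::real. (g (x + t *\<^sub>R d + ((1/2) * t\<^sup>2) *\<^sub>R w) - g x - t *\<^sub>R dir_deriv g x d)
                         /\<^sub>R ((1/2) * t\<^sup>2)) \<longlongrightarrow> v) (at_right 0))"

definition locally_lipschitz_at :: "('a::metric_space \<Rightarrow> 'b::metric_space) \<Rightarrow> 'a \<Rightarrow> bool" where
  "locally_lipschitz_at g x \<longleftrightarrow> (\<exists>e>0. \<exists>L. L-lipschitz_on (ball x e) g)"

definition second_order_gph_regular :: "('a::real_normed_vector \<Rightarrow> 'b::real_normed_vector) \<Rightarrow> 'a \<Rightarrow> bool" where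
  "second_order_gph_regular g x \<longleftrightarrow>
     locally_lipschitz_at g x \<and> second_order_dir_differentiable g x \<and>
     (\<forall>d (w::real \<Rightarrow> 'a). ((\<lambda>t. t *\<^sub>R w t) \<longlongrightarrow> 0) (at_right 0) \<longrightarrow>
        (\<exists>r::real \<Rightarrow> 'b.
           ((\<lambda>t. norm (r t) / t\<^sup>2) \<longlongrightarrow> 0) (at_right 0) \<and>
           (\<forall>t\<ge>0. g (x + t *\<^sub>R d + ((1/2) * t\<^sup>2) *\<^sub>R w t)
                    = g x + t *\<^sub>R dir_deriv g x d + ((1/2) * t\<^sup>2) *\<^sub>R dir_deriv2 g x d (w t) + r t)))"

end

theory Submission
  imports Defs
begin

lemma reg_rem:
  fixes f :: "'a::real_normed_vector \<Rightarrow> 'b::real_normed_vector"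
  assumes "second_order_gph_regular f y" "((\<lambda>t. t *\<^sub>R u t) \<longlongrightarrow> 0) (at_right 0)"
  shows "((\<lambda>t. norm (f (y + t *\<^sub>R v + ((1/2) * t\<^sup>2) *\<^sub>R u t) - f y - t *\<^sub>R dir_deriv f y v
      - ((1/2) * t\<^sup>2) *\<^sub>R dir_deriv2 f y v (u t)) / t\<^sup>2) \<longlongrightarrow> 0) (at_right 0)"
proof -
  from assms obtain r where r: "((\<lambda>t. norm (r t) / t\<^sup>2) \<longlongrightarrow> 0) (at_right 0)"
    and eq: "\<forall>t\<ge>0. f (y + t *\<^sub>R v + ((1/2) * t\<^sup>2) *\<^sub>R u t)
                    = f y + t *\<^sub>R dir_deriv f y v + ((1/2) * t\<^sup>2) *\<^sub>R dir_deriv2 f y v (u t) + r t"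
    unfolding second_order_gph_regular_def by blast
  show ?thesis
    apply (rule Lim_transform_eventually[OF r])
    using eventually_at_right_less[of "0::real"]
    apply (rule eventually_mono)
    using eq by (simp add: algebra_simps)
qed

lemma d2_tendsto:
  assumes "second_order_dir_differentiable g x"
  shows "((\<lambda>t::real. (g (x + t *\<^sub>R d + ((1/2) * t\<^sup>2) *\<^sub>R w) - g x - t *\<^sub>R dir_deriv g x d)
                         /\<^sub>R ((1/2) * t\<^sup>2)) \<longlongrightarrow> dir_deriv2 g x d w) (at_right 0)"
proof -
  from assms obtain l where l: "((\<lambda>t::real. (g (x + t *\<^sub>R d + ((1/2) * t\<^sup>2) *\<^sub>R w) - g x - t *\<^sub>R dir_deriv g x d)
                         /\<^sub>R ((1/2) * t\<^sup>2)) \<longlongrightarrow> l) (at_right 0)"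
    unfolding second_order_dir_differentiable_def by blast
  then have "dir_deriv2 g x d w = l" unfolding dir_deriv2_def by (rule tendsto_Lim[rotated]) simp
  with l show ?thesis by simp
qed

lemma d2_lip:
  fixes f :: "'a::real_normed_vector \<Rightarrow> 'b::real_normed_vector"
  assumes "second_order_gph_regular f y"
  obtains L where "L \<ge> 0" "\<And>v w w'. norm (dir_deriv2 f y v w - dir_deriv2 f y v w') \<le> L * norm (w - w')"
proof -
  from assms obtain e L where e: "e > 0" and L: "L-lipschitz_on (ball y e) f"
    unfolding second_order_gph_regular_def locally_lipschitz_at_def by blast
  have sd: "second_order_dir_differentiable f y" using assms unfolding second_order_gph_regular_def by blast
  have "norm (dir_deriv2 f y v w - dir_deriv2 f y v w') \<le> L * norm (w - w')" for v w w'
  proof -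
    define Q where "Q z t = (f (y + t *\<^sub>R v + ((1/2) * t\<^sup>2) *\<^sub>R z) - f y - t *\<^sub>R dir_deriv f y v)
                         /\<^sub>R ((1/2) * t\<^sup>2)" for z t
    have lim: "((\<lambda>t. Q w t - Q w' t) \<longlongrightarrow> dir_deriv2 f y v w - dir_deriv2 f y v w') (at_right 0)"
      unfolding Q_def by (intro tendsto_diff d2_tendsto sd)
    have p: "((\<lambda>t. y + t *\<^sub>R v + ((1/2) * t\<^sup>2) *\<^sub>R z) \<longlongrightarrow> y) (at_right 0)" for z
    proof -
      have "((\<lambda>t. y + t *\<^sub>R v + ((1/2) * t\<^sup>2) *\<^sub>R z) \<longlongrightarrow> y + 0 *\<^sub>R v + ((1/2) * 0\<^sup>2) *\<^sub>R z) (at_right (0::real))"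
        by (intro tendsto_intros)
      then show ?thesis by simp
    qed
    have ev: "eventually (\<lambda>t. norm (Q w t - Q w' t) \<le> L * norm (w - w')) (at_right 0)"
      using tendstoD[OF p[of w] e] tendstoD[OF p[of w'] e] eventually_at_right_less[of "0::real"]
    proof eventually_elim
      case (elim t)
      let ?p = "y + t *\<^sub>R v + ((1/2) * t\<^sup>2) *\<^sub>R w"
      let ?q = "y + t *\<^sub>R v + ((1/2) * t\<^sup>2) *\<^sub>R w'"
      have inb: "?p \<in> ball y e" "?q \<in> ball y e" using elim by (auto simp: dist_commute)
      have c: "(1/2) * t\<^sup>2 > 0" using elim by simp
      have "Q w t - Q w' t = (f ?p - f ?q) /\<^sub>R ((1/2) * t\<^sup>2)"
        unfolding Q_def by (simp add: algebra_simps)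
      then have "norm (Q w t - Q w' t) = norm (f ?p - f ?q) / ((1/2) * t\<^sup>2)"
        using c by simp
      also have "\<dots> \<le> L * dist ?p ?q / ((1/2) * t\<^sup>2)"
        using lipschitz_onD[OF L inb] c by (simp add: dist_norm divide_right_mono)
      also have "dist ?p ?q = ((1/2) * t\<^sup>2) * norm (w - w')"
        using c by (simp add: dist_norm algebra_simps flip: scaleR_diff_right)
      also have "L * (((1/2) * t\<^sup>2) * norm (w - w')) / ((1/2) * t\<^sup>2) = L * norm (w - w')"
        using c by simp
      finally show ?case .
    qed
    show ?thesis by (rule Lim_norm_ubound[OF _ lim ev]) simp
  qed
  moreover have "L \<ge> 0" using L lipschitz_on_nonneg by blast
  ultimately show ?thesis using that by blast
qed

lemma charact:
  fixes h :: "'a::real_normed_vector \<Rightarrow> 'b::real_normed_vector"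
  assumes lip: "locally_lipschitz_at h x"
  and H: "\<And>d u. ((\<lambda>t. t *\<^sub>R u t) \<longlongrightarrow> 0) (at_right 0) \<Longrightarrow>
     ((\<lambda>t. norm (h (x + t *\<^sub>R d + ((1/2) * t\<^sup>2) *\<^sub>R u t) - h x - t *\<^sub>R DA d
        - ((1/2) * t\<^sup>2) *\<^sub>R DB d (u t)) / t\<^sup>2) \<longlongrightarrow> 0) (at_right 0)"
  shows "second_order_gph_regular h x"
proof -
  have first: "((\<lambda>t. (h (x + t *\<^sub>R d) - h x) /\<^sub>R t) \<longlongrightarrow> DA d) (at_right 0)" for d
  proof -
    define E where "E t = h (x + t *\<^sub>R d) - h x - t *\<^sub>R DA d - ((1/2) * t\<^sup>2) *\<^sub>R DB d 0" for t
    have E: "((\<lambda>t. norm (E t) / t\<^sup>2) \<longlongrightarrow> 0) (at_right 0)"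
      using H[of "\<lambda>_. 0" d] by (simp add: E_def)
    have "((\<lambda>t. (h (x + t *\<^sub>R d) - h x) /\<^sub>R t - DA d) \<longlongrightarrow> 0) (at_right 0)"
    proof (rule Lim_null_comparison)
      show "eventually (\<lambda>t. norm ((h (x + t *\<^sub>R d) - h x) /\<^sub>R t - DA d)
          \<le> t * (norm (E t) / t\<^sup>2) + t * norm (DB d 0) / 2) (at_right 0)"
        using eventually_at_right_less[of "0::real"]
      proof eventually_elim
        case (elim t)
        have "(h (x + t *\<^sub>R d) - h x) /\<^sub>R t - DA d = inverse t *\<^sub>R E t + (t/2) *\<^sub>R DB d 0"
          using elim by (simp add: E_def algebra_simps power2_eq_square)
        then have "norm ((h (x + t *\<^sub>R d) - h x) /\<^sub>R t - DA d) \<le> norm (inverse t *\<^sub>R E t) + norm ((t/2) *\<^sub>R DB d 0)"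
          by (metis norm_triangle_ineq)
        also have "\<dots> = t * (norm (E t) / t\<^sup>2) + t * norm (DB d 0) / 2"
          using elim by (simp add: power2_eq_square field_simps)
        finally show ?case .
      qed
      have "((\<lambda>t. t * (norm (E t) / t\<^sup>2) + t * norm (DB d 0) / 2) \<longlongrightarrow> 0 * 0 + 0 * norm (DB d 0) / 2) (at_right 0)"
        by (intro tendsto_intros E) auto
      then show "((\<lambda>t. t * (norm (E t) / t\<^sup>2) + t * norm (DB d 0) / 2) \<longlongrightarrow> 0) (at_right 0)" by simp
    qed
    then show ?thesis by (simp add: Lim_null[symmetric])
  qed
  have DAeq: "dir_deriv h x d = DA d" for d
    unfolding dir_deriv_def by (rule tendsto_Lim[OF _ first]) simp
  have second: "((\<lambda>t. (h (x + t *\<^sub>R d + ((1/2) * t\<^sup>2) *\<^sub>R w) - h x - t *\<^sub>R DA d) /\<^sub>R ((1/2) * t\<^sup>2))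
      \<longlongrightarrow> DB d w) (at_right 0)" for d w
  proof -
    define E where "E t = h (x + t *\<^sub>R d + ((1/2) * t\<^sup>2) *\<^sub>R w) - h x - t *\<^sub>R DA d - ((1/2) * t\<^sup>2) *\<^sub>R DB d w" for t
    have tw: "((\<lambda>t. t *\<^sub>R w) \<longlongrightarrow> 0) (at_right (0::real))"
    proof -
      have "((\<lambda>t. t *\<^sub>R w) \<longlongrightarrow> 0 *\<^sub>R w) (at_right (0::real))" by (intro tendsto_intros)
      then show ?thesis by simp
    qed
    have E: "((\<lambda>t. norm (E t) / t\<^sup>2) \<longlongrightarrow> 0) (at_right 0)"
      using H[of "\<lambda>_. w" d] tw by (simp add: E_def)
    have "((\<lambda>t. (h (x + t *\<^sub>R d + ((1/2) * t\<^sup>2) *\<^sub>R w) - h x - t *\<^sub>R DA d) /\<^sub>R ((1/2) * t\<^sup>2) - DB d w) \<longlongrightarrow> 0) (at_right 0)"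
    proof (rule Lim_null_comparison)
      show "eventually (\<lambda>t. norm ((h (x + t *\<^sub>R d + ((1/2) * t\<^sup>2) *\<^sub>R w) - h x - t *\<^sub>R DA d) /\<^sub>R ((1/2) * t\<^sup>2) - DB d w)
          \<le> 2 * (norm (E t) / t\<^sup>2)) (at_right 0)"
        using eventually_at_right_less[of "0::real"]
      proof eventually_elim
        case (elim t)
        have "(h (x + t *\<^sub>R d + ((1/2) * t\<^sup>2) *\<^sub>R w) - h x - t *\<^sub>R DA d) /\<^sub>R ((1/2) * t\<^sup>2) - DB d w
            = (2 / t\<^sup>2) *\<^sub>R E t"
          using elim by (simp add: E_def algebra_simps)
        then show ?case using elim by simp
      qed
      show "((\<lambda>t. 2 * (norm (E t) / t\<^sup>2)) \<longlongrightarrow> 0) (at_right 0)"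
        using tendsto_mult_right_zero[OF E, of 2] by simp
    qed
    then show ?thesis by (simp add: Lim_null[symmetric])
  qed
  have DBeq: "dir_deriv2 h x d w = DB d w" for d w
    unfolding dir_deriv2_def DAeq by (rule tendsto_Lim[OF _ second]) simp
  have sd: "second_order_dir_differentiable h x"
    unfolding second_order_dir_differentiable_def DAeq using first second by blast
  show ?thesis
    unfolding second_order_gph_regular_def DAeq DBeq
  proof (intro conjI lip sd allI impI)
    fix d and w :: "real \<Rightarrow> 'a"
    assume w: "((\<lambda>t. t *\<^sub>R w t) \<longlongrightarrow> 0) (at_right 0)"
    show "\<exists>r. ((\<lambda>t. norm (r t) / t\<^sup>2) \<longlongrightarrow> 0) (at_right 0) \<and>
          (\<forall>t\<ge>0. h (x + t *\<^sub>R d + ((1/2) * t\<^sup>2) *\<^sub>R w t)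
                 = h x + t *\<^sub>R DA d + ((1/2) * t\<^sup>2) *\<^sub>R DB d (w t) + r t)"
      by (rule exI[of _ "\<lambda>t. h (x + t *\<^sub>R d + ((1/2) * t\<^sup>2) *\<^sub>R w t) - h x - t *\<^sub>R DA d
        - ((1/2) * t\<^sup>2) *\<^sub>R DB d (w t)"]) (use H[OF w] in simp)
  qed
qed

lemma lip_comp:
  assumes "locally_lipschitz_at g x" "locally_lipschitz_at f (g x)"
  shows "locally_lipschitz_at (f \<circ> g) x"
proof -
  obtain e1 L1 where e1: "e1 > 0" and L1: "L1-lipschitz_on (ball x e1) g"
    using assms(1) unfolding locally_lipschitz_at_def by blast
  obtain e2 L2 where e2: "e2 > 0" and L2: "L2-lipschitz_on (ball (g x) e2) f"
    using assms(2) unfolding locally_lipschitz_at_def by blast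
  have L10: "L1 \<ge> 0" using L1 lipschitz_on_nonneg by blast
  define \<delta> where "\<delta> = min e1 (e2 / (L1 + 1))"
  have dpos: "\<delta> > 0" using e1 e2 L10 by (simp add: \<delta>_def)
  have sub: "ball x \<delta> \<subseteq> ball x e1" by (auto simp: \<delta>_def)
  have L1': "L1-lipschitz_on (ball x \<delta>) g" using L1 sub lipschitz_on_subset by blast
  have "g ` ball x \<delta> \<subseteq> ball (g x) e2"
  proof
    fix z assume "z \<in> g ` ball x \<delta>"
    then obtain y where y: "y \<in> ball x \<delta>" "z = g y" by blast
    have "dist (g x) (g y) \<le> L1 * dist x y"
      using lipschitz_onD[OF L1 _ ] y sub dpos by (meson centre_in_ball subsetD)
    also have "\<dots> \<le> L1 * \<delta>" using y L10 by (intro mult_left_mono) auto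
    also have "\<dots> \<le> L1 * (e2 / (L1 + 1))" using L10 by (intro mult_left_mono) (auto simp: \<delta>_def)
    also have "\<dots> < e2" using L10 e2 by (simp add: field_simps)
    finally show "z \<in> ball (g x) e2" using y by simp
  qed
  then have "L2-lipschitz_on (g ` ball x \<delta>) f" using L2 lipschitz_on_subset by blast
  then have "(L2 * L1)-lipschitz_on (ball x \<delta>) (f \<circ> g)" using lipschitz_on_compose L1' by blast
  then show ?thesis unfolding locally_lipschitz_at_def using dpos by blast
qed

theorem proposition2p4:
  fixes g :: "'n::euclidean_space \<Rightarrow> 'm::euclidean_space"
    and f :: "'m \<Rightarrow> 'r::euclidean_space"
    and xs :: 'n
  assumes "second_order_gph_regular g xs"
    and "second_order_gph_regular f (g xs)"
  shows "second_order_gph_regular (f \<circ> g) xs"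
proof -
  obtain Lg where Lg: "Lg \<ge> 0" "\<And>v w w'. norm (dir_deriv2 g xs v w - dir_deriv2 g xs v w') \<le> Lg * norm (w - w')"
    using d2_lip[OF assms(1)] by blast
  obtain Lf where Lf: "Lf \<ge> 0" "\<And>v w w'. norm (dir_deriv2 f (g xs) v w - dir_deriv2 f (g xs) v w') \<le> Lf * norm (w - w')"
    using d2_lip[OF assms(2)] by blast
  have lip: "locally_lipschitz_at (f \<circ> g) xs"
    using assms lip_comp unfolding second_order_gph_regular_def by blast
  show ?thesis
  proof (rule charact[where DA = "\<lambda>d. dir_deriv f (g xs) (dir_deriv g xs d)"
        and DB = "\<lambda>d w. dir_deriv2 f (g xs) (dir_deriv g xs d) (dir_deriv2 g xs d w)", OF lip])
    fix d and u :: "real \<Rightarrow> 'n"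
    assume u: "((\<lambda>t. t *\<^sub>R u t) \<longlongrightarrow> 0) (at_right 0)"
    define v where "v = dir_deriv g xs d"
    define rg where "rg t = g (xs + t *\<^sub>R d + ((1/2) * t\<^sup>2) *\<^sub>R u t) - g xs - t *\<^sub>R v
       - ((1/2) * t\<^sup>2) *\<^sub>R dir_deriv2 g xs d (u t)" for t
    have rg: "((\<lambda>t. norm (rg t) / t\<^sup>2) \<longlongrightarrow> 0) (at_right 0)"
      using reg_rem[OF assms(1) u, of d] by (simp add: rg_def v_def)
    define U where "U t = dir_deriv2 g xs d (u t) + (2 / t\<^sup>2) *\<^sub>R rg t" for t
    have geq: "g (xs + t *\<^sub>R d + ((1/2) * t\<^sup>2) *\<^sub>R u t) = g xs + t *\<^sub>R v + ((1/2) * t\<^sup>2) *\<^sub>R U t" for t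
    proof (cases "t = 0")
      case True then show ?thesis by simp
    next
      case False
      then have "((1/2) * t\<^sup>2) *\<^sub>R U t = ((1/2) * t\<^sup>2) *\<^sub>R dir_deriv2 g xs d (u t) + rg t"
        by (simp add: U_def scaleR_add_right)
      then show ?thesis by (simp add: rg_def)
    qed
    have U0: "((\<lambda>t. t *\<^sub>R U t) \<longlongrightarrow> 0) (at_right 0)"
    proof (rule Lim_null_comparison)
      show "eventually (\<lambda>t. norm (t *\<^sub>R U t) \<le> t * norm (dir_deriv2 g xs d 0) + Lg * norm (t *\<^sub>R u t)
          + 2 * t * (norm (rg t) / t\<^sup>2)) (at_right 0)"
        using eventually_at_right_less[of "0::real"]
      proof eventually_elim
        case (elim t)
        have "norm (t *\<^sub>R U t) = t * norm (U t)" using elim by simp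
        also have "norm (U t) \<le> norm (dir_deriv2 g xs d (u t)) + norm ((2 / t\<^sup>2) *\<^sub>R rg t)"
          unfolding U_def by (rule norm_triangle_ineq)
        also have "norm (dir_deriv2 g xs d (u t)) \<le> norm (dir_deriv2 g xs d 0) + Lg * norm (u t)"
          using Lg(2)[of d "u t" 0] norm_triangle_ineq2[of "dir_deriv2 g xs d (u t)" "dir_deriv2 g xs d 0"]
          by simp
        finally have "norm (t *\<^sub>R U t) \<le> t * (norm (dir_deriv2 g xs d 0) + Lg * norm (u t) + norm ((2 / t\<^sup>2) *\<^sub>R rg t))"
          using elim by (simp add: mult_left_mono)
        also have "\<dots> = t * norm (dir_deriv2 g xs d 0) + Lg * norm (t *\<^sub>R u t) + 2 * t * (norm (rg t) / t\<^sup>2)"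
          using elim by (simp add: algebra_simps)
        finally show ?case .
      qed
      have "((\<lambda>t. t * norm (dir_deriv2 g xs d 0) + Lg * norm (t *\<^sub>R u t)
          + 2 * t * (norm (rg t) / t\<^sup>2)) \<longlongrightarrow> 0 * norm (dir_deriv2 g xs d 0) + Lg * norm (0::'n) + 2 * 0 * 0) (at_right 0)"
        by (intro tendsto_intros u rg)
      then show "((\<lambda>t. t * norm (dir_deriv2 g xs d 0) + Lg * norm (t *\<^sub>R u t)
          + 2 * t * (norm (rg t) / t\<^sup>2)) \<longlongrightarrow> 0) (at_right 0)" by simp
    qed
    define Rf where "Rf t = f (g xs + t *\<^sub>R v + ((1/2) * t\<^sup>2) *\<^sub>R U t) - f (g xs) - t *\<^sub>R dir_deriv f (g xs) v
      - ((1/2) * t\<^sup>2) *\<^sub>R dir_deriv2 f (g xs) v (U t)" for t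
    have rf: "((\<lambda>t. norm (Rf t) / t\<^sup>2) \<longlongrightarrow> 0) (at_right 0)"
      unfolding Rf_def by (rule reg_rem[OF assms(2) U0])
    show "((\<lambda>t. norm ((f \<circ> g) (xs + t *\<^sub>R d + ((1/2) * t\<^sup>2) *\<^sub>R u t) - (f \<circ> g) xs
        - t *\<^sub>R dir_deriv f (g xs) (dir_deriv g xs d)
        - ((1/2) * t\<^sup>2) *\<^sub>R dir_deriv2 f (g xs) (dir_deriv g xs d) (dir_deriv2 g xs d (u t))) / t\<^sup>2) \<longlongrightarrow> 0) (at_right 0)"
    proof (rule Lim_null_comparison)
      show "eventually (\<lambda>t. norm (norm ((f \<circ> g) (xs + t *\<^sub>R d + ((1/2) * t\<^sup>2) *\<^sub>R u t) - (f \<circ> g) xs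
        - t *\<^sub>R dir_deriv f (g xs) (dir_deriv g xs d)
        - ((1/2) * t\<^sup>2) *\<^sub>R dir_deriv2 f (g xs) (dir_deriv g xs d) (dir_deriv2 g xs d (u t))) / t\<^sup>2)
        \<le> norm (Rf t) / t\<^sup>2 + Lf * (norm (rg t) / t\<^sup>2)) (at_right 0)"
        using eventually_at_right_less[of "0::real"]
      proof eventually_elim
        case (elim t)
        have c: "t\<^sup>2 > 0" using elim by simp
        define Z where "Z = dir_deriv2 f (g xs) v (U t) - dir_deriv2 f (g xs) v (dir_deriv2 g xs d (u t))"
        have "(f \<circ> g) (xs + t *\<^sub>R d + ((1/2) * t\<^sup>2) *\<^sub>R u t) - (f \<circ> g) xs
          - t *\<^sub>R dir_deriv f (g xs) (dir_deriv g xs d)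
          - ((1/2) * t\<^sup>2) *\<^sub>R dir_deriv2 f (g xs) (dir_deriv g xs d) (dir_deriv2 g xs d (u t))
          = Rf t + ((1/2) * t\<^sup>2) *\<^sub>R Z"
          unfolding comp_def geq Rf_def Z_def v_def[symmetric] by (simp add: algebra_simps)
        then have "norm (norm ((f \<circ> g) (xs + t *\<^sub>R d + ((1/2) * t\<^sup>2) *\<^sub>R u t) - (f \<circ> g) xs
          - t *\<^sub>R dir_deriv f (g xs) (dir_deriv g xs d)
          - ((1/2) * t\<^sup>2) *\<^sub>R dir_deriv2 f (g xs) (dir_deriv g xs d) (dir_deriv2 g xs d (u t))) / t\<^sup>2)
          = norm (Rf t + ((1/2) * t\<^sup>2) *\<^sub>R Z) / t\<^sup>2" by simp
        also have "\<dots> \<le> (norm (Rf t) + (1/2) * t\<^sup>2 * norm Z) / t\<^sup>2"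
          using c norm_triangle_ineq[of "Rf t" "((1/2) * t\<^sup>2) *\<^sub>R Z"]
          by (intro divide_right_mono) auto
        also have "\<dots> = norm (Rf t) / t\<^sup>2 + (1/2) * norm Z"
          using c by (simp add: field_simps)
        also have "norm Z \<le> Lf * norm (U t - dir_deriv2 g xs d (u t))"
          unfolding Z_def by (rule Lf(2))
        also have "U t - dir_deriv2 g xs d (u t) = (2 / t\<^sup>2) *\<^sub>R rg t" by (simp add: U_def)
        also have "(1/2) * (Lf * norm ((2 / t\<^sup>2) *\<^sub>R rg t)) = Lf * (norm (rg t) / t\<^sup>2)"
          using c by simp
        finally show ?case by simp
      qed
      have "((\<lambda>t. norm (Rf t) / t\<^sup>2 + Lf * (norm (rg t) / t\<^sup>2)) \<longlongrightarrow> 0 + Lf * 0) (at_right 0)"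
        by (intro tendsto_intros rf rg)
      then show "((\<lambda>t. norm (Rf t) / t\<^sup>2 + Lf * (norm (rg t) / t\<^sup>2)) \<longlongrightarrow> 0) (at_right 0)" by simp
    qed
  qed
qed

end
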